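(* Let $M$ be the metric space \[M:=\Big\{\Big(a,\tfrac{1}{2^{n}}\Big)\colon a\in[0,1],\ n\in\mathbb{N}\Big\}\cup \Big\{(a,b)\colon a\in\{0,1\},\ b\in\Big[0,\tfrac{1}{2}\Big]\Big\}\subseteq\mathbb{R}^2\] with the metric \[d\big((a,b),(c,e)\big):=\begin{cases} |a-c|, & \text{if }b=e,\\ \min\{a+c,\,2-a-c\}+|b-e|, &\text{if } b\neq e, \end{cases}\] and base point $(0,0)$. Let $x=(0,0)$, $y=(1,0)$, and $\pi_2(a,b)=b$. Let $\varepsilon,\delta>0$ and let $\nu\in\operatorname{conv}\big(\mathrm{Mol}_{\delta,1}(M)\big)$. If there exists $g\in B_{\mathrm{Lip}_0(M)}$ such that $g(\nu)=\|\nu\|$ and $|g(m_{xy})|<\varepsilon$, then there exists $f\in B_{\mathrm{Lip}_0(M)}$ such that \[f(\nu)>\frac{\|\nu\|-\varepsilon-2\delta}{1+\varepsilon+2\delta}\] and $f(p)=0$ for every $p\in M$ with $\pi_2(p)\le\delta$.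
   Context: For a pointed metric space $(M,d,0)$, $\mathrm{Lip}_0(M)$ is the Banach space of Lipschitz functions $f\colon M\to\mathbb{R}$ with $f(0)=0$, normed by the best Lipschitz constant. The Lipschitz-free space $\mathcal{F}(M)$ is the norm-closed linear span of the evaluation functionals $\delta_u$ ($\delta_u(f)=f(u)$), $u\in M$, in $\mathrm{Lip}_0(M)^*$; its dual is $\mathrm{Lip}_0(M)$, and elements of $\mathrm{Lip}_0(M)$ act on $\mathcal{F}(M)$ accordingly. For $u\neq v$ in $M$, the molecule is $m_{uv}=(\delta_u-\delta_v)/d(u,v)\in\mathcal{F}(M)$. For $\delta,\varepsilon>0$, $\mathrm{Mol}_{\delta,\varepsilon}(M)=\{m_{uv}\colon u,v\in M,\ u\neq v,\ \delta<\pi_2(u)<\varepsilon,\ \delta<\pi_2(v)<\varepsilon\}$, and $\operatorname{conv}$ denotes the convex hull. $B_X$ denotes the closed unit ball; $\mathbb{N}=\{1,2,\dots\}$. *)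

theory Defs
  imports "HOL-Analysis.Analysis"
begin

definition pi2 :: "real \<times> real \<Rightarrow> real" where
  "pi2 p = snd p"

definition Msp :: "(real \<times> real) set" where
  "Msp = {(a, 1 / 2 ^ n) | a n. a \<in> {0..1} \<and> n \<ge> (1::nat)}
       \<union> {(a, b) | a b. a \<in> {0, 1} \<and> b \<in> {0..1/2}}"

definition dM :: "real \<times> real \<Rightarrow> real \<times> real \<Rightarrow> real" where
  "dM p q = (if snd p = snd q then \<bar>fst p - fst q\<bar>
             else min (fst p + fst q) (2 - fst p - fst q) + \<bar>snd p - snd q\<bar>)"

text \<open>Closed unit ball of Lip_0(M) with base point (0,0): functions vanishing at the
  base point with Lipschitz constant at most 1 on M (values off M are irrelevant).\<close>

definition Lip0Ball :: "(real \<times> real \<Rightarrow> real) set" where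
  "Lip0Ball = {f. f (0, 0) = 0 \<and> (\<forall>p\<in>Msp. \<forall>q\<in>Msp. \<bar>f p - f q\<bar> \<le> dM p q)}"

text \<open>Molecule m_uv, as a functional acting on Lipschitz functions.\<close>

definition mol :: "real \<times> real \<Rightarrow> real \<times> real \<Rightarrow> (real \<times> real \<Rightarrow> real) \<Rightarrow> real" where
  "mol u v f = (f u - f v) / dM u v"

definition convMol :: "real \<Rightarrow> real \<Rightarrow> ((real \<times> real \<Rightarrow> real) \<Rightarrow> real) set" where
  "convMol \<delta> \<epsilon> = {\<nu>. \<exists>(n::nat) (lam::nat \<Rightarrow> real) u v. n \<ge> 1 \<and>
      (\<forall>i<n. lam i \<ge> 0 \<and> u i \<in> Msp \<and> v i \<in> Msp \<and> u i \<noteq> v i \<and>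
             \<delta> < pi2 (u i) \<and> pi2 (u i) < \<epsilon> \<and> \<delta> < pi2 (v i) \<and> pi2 (v i) < \<epsilon>) \<and>
      (\<Sum>i<n. lam i) = 1 \<and>
      \<nu> = (\<lambda>f. \<Sum>i<n. lam i * mol (u i) (v i) f)}"

definition normF :: "((real \<times> real \<Rightarrow> real) \<Rightarrow> real) \<Rightarrow> real" where
  "normF \<nu> = (SUP f\<in>Lip0Ball. \<nu> f)"

end

theory Submission
  imports Defs
begin

lemma Msp_bounds:
  assumes "p \<in> Msp"
  shows "0 \<le> fst p \<and> fst p \<le> 1 \<and> 0 \<le> snd p \<and> snd p \<le> 1/2"
proof -
  have h: "(1::real) / 2 ^ n \<le> 1/2" if "n \<ge> 1" for n :: nat
  proof -
    have "(2::real) ^ 1 \<le> 2 ^ n" using that by (intro power_increasing) auto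
    then show ?thesis by (simp add: divide_simps)
  qed
  show ?thesis using assms h unfolding Msp_def by auto
qed

lemma fst_lip:
  assumes "p \<in> Msp" "q \<in> Msp"
  shows "\<bar>fst p - fst q\<bar> \<le> dM p q"
  using Msp_bounds[OF assms(1)] Msp_bounds[OF assms(2)]
  unfolding dM_def by (auto simp: abs_if)

lemma dM_nonneg:
  assumes "p \<in> Msp" "q \<in> Msp"
  shows "0 \<le> dM p q"
  using fst_lip[OF assms] by linarith

lemma dM_pos:
  assumes "p \<in> Msp" "q \<in> Msp" "p \<noteq> q"
  shows "0 < dM p q"
proof (cases "snd p = snd q")
  case True
  then have "fst p \<noteq> fst q" using assms(3) by (metis prod.expand)
  then show ?thesis using True unfolding dM_def by auto
next
  case False
  then show ?thesis using Msp_bounds[OF assms(1)] Msp_bounds[OF assms(2)]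
    unfolding dM_def by auto
qed

lemma mol_le1:
  assumes "f \<in> Lip0Ball" "u \<in> Msp" "v \<in> Msp" "u \<noteq> v"
  shows "\<bar>mol u v f\<bar> \<le> 1"
proof -
  have "\<bar>f u - f v\<bar> \<le> dM u v" using assms unfolding Lip0Ball_def by auto
  moreover have "0 < dM u v" using dM_pos assms by auto
  ultimately show ?thesis unfolding mol_def by (simp add: abs_divide divide_simps)
qed

lemma fst_ratio:
  assumes "u \<in> Msp" "v \<in> Msp" "u \<noteq> v"
  shows "\<bar>(fst u - fst v) / dM u v\<bar> \<le> 1"
proof -
  have "0 < dM u v" using dM_pos assms by auto
  then show ?thesis using fst_lip[OF assms(1,2)] by (simp add: abs_divide divide_simps)
qed

lemma final_ineq:
  fixes N e eps d :: real
  assumes "N \<ge> 0" "0 \<le> e" "e < eps" "d > 0"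
  shows "(N - eps - 2 * d) / (1 + eps + 2 * d) < (N - 2 * d - e) / (1 + 2 * d + e)"
proof -
  have "(N - 2*d - e) * (1 + eps + 2*d) - (N - eps - 2*d) * (1 + 2*d + e) = (eps - e) * (N + 1)"
    by (simp add: algebra_simps)
  moreover have "(eps - e) * (N + 1) > 0" using assms by simp
  ultimately have "(N - eps - 2*d) * (1 + 2*d + e) < (N - 2*d - e) * (1 + eps + 2*d)" by linarith
  then show ?thesis using assms by (simp add: divide_simps)
qed

theorem mainTheorem2:
  fixes \<epsilon> \<delta> :: real and \<nu> :: "(real \<times> real \<Rightarrow> real) \<Rightarrow> real"
  assumes "\<epsilon> > 0" and "\<delta> > 0"
    and "\<nu> \<in> convMol \<delta> 1"
    and "\<exists>g\<in>Lip0Ball. \<nu> g = normF \<nu> \<and> \<bar>mol (0, 0) (1, 0) g\<bar> < \<epsilon>"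
  shows "\<exists>f\<in>Lip0Ball. \<nu> f > (normF \<nu> - \<epsilon> - 2 * \<delta>) / (1 + \<epsilon> + 2 * \<delta>)
           \<and> (\<forall>p\<in>Msp. pi2 p \<le> \<delta> \<longrightarrow> f p = 0)"
proof -
  obtain n :: nat and lam :: "nat \<Rightarrow> real" and u v :: "nat \<Rightarrow> real \<times> real" where n1: "n \<ge> 1" and
    H: "\<And>i. i < n \<Longrightarrow> lam i \<ge> 0 \<and> u i \<in> Msp \<and> v i \<in> Msp \<and> u i \<noteq> v i \<and>
             \<delta> < pi2 (u i) \<and> pi2 (u i) < 1 \<and> \<delta> < pi2 (v i) \<and> pi2 (v i) < 1" and
    S: "(\<Sum>i<n. lam i) = 1" and
    nu: "\<nu> = (\<lambda>f. \<Sum>i<n. lam i * mol (u i) (v i) f)"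
    using assms(3) unfolding convMol_def by blast
  obtain g where g: "g \<in> Lip0Ball" and gN: "\<nu> g = normF \<nu>"
    and gm: "\<bar>mol (0, 0) (1, 0) g\<bar> < \<epsilon>" using assms(4) by blast
  have g0: "g (0,0) = 0" and glip: "\<And>p q. p \<in> Msp \<Longrightarrow> q \<in> Msp \<Longrightarrow> \<bar>g p - g q\<bar> \<le> dM p q"
    using g unfolding Lip0Ball_def by auto
  have "u 0 \<in> Msp" "\<delta> < pi2 (u 0)" using H[of 0] n1 by auto
  then have dle: "\<delta> \<le> 1/2" using Msp_bounds[of "u 0"] unfolding pi2_def by auto
  define z0 where "z0 = (0::real, \<delta>)"
  define z1 where "z1 = (1::real, \<delta>)"
  have z0M: "z0 \<in> Msp" unfolding z0_def Msp_def using dle assms(2) by auto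
  have z1M: "z1 \<in> Msp" unfolding z1_def Msp_def using dle assms(2) by auto
  have xM: "(0::real, 0::real) \<in> Msp" unfolding Msp_def by auto
  have yM: "(1::real, 0::real) \<in> Msp" unfolding Msp_def by auto
  define e where "e = \<bar>g (1,0)\<bar>"
  have "dM (0,0) (1,0) = 1" unfolding dM_def by simp
  then have ee: "e < \<epsilon>" using gm g0 unfolding e_def mol_def by simp
  have e0: "e \<ge> 0" unfolding e_def by simp
  have "dM z0 (0,0) = \<delta>" unfolding dM_def z0_def using assms(2) by simp
  then have gz0: "\<bar>g z0\<bar> \<le> \<delta>" using glip[OF z0M xM] g0 by simp
  have "dM z1 (1,0) = \<delta>" unfolding dM_def z1_def using assms(2) by simp
  then have "\<bar>g z1 - g (1,0)\<bar> \<le> \<delta>" using glip[OF z1M yM] by simp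
  define D where "D = g z1 - g z0"
  have Dle: "\<bar>D\<bar> \<le> 2 * \<delta> + e" unfolding D_def e_def
    using gz0 \<open>\<bar>g z1 - g (1,0)\<bar> \<le> \<delta>\<close> by linarith
  define K where "K = 1 + 2 * \<delta> + e"
  have Kpos: "K > 0" unfolding K_def using e0 assms(2) by simp
  have DK: "1 + \<bar>D\<bar> \<le> K" unfolding K_def using Dle by simp
  define F where "F = (\<lambda>p. if snd p \<le> \<delta> then 0 else g p - g z0 - D * fst p)"
  define f where "f = (\<lambda>p. F p / K)"
  have HL: "\<bar>F p\<bar> \<le> K * dM p q" if pM: "p \<in> Msp" and qM: "q \<in> Msp"
    and ph: "snd p > \<delta>" and ql: "snd q \<le> \<delta>" for p q
  proof -
    obtain a b where p: "p = (a,b)" by (cases p)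
    obtain c e' where q: "q = (c,e')" by (cases q)
    have bp: "0 \<le> a" "a \<le> 1" using Msp_bounds[OF pM] p by auto
    have bq: "0 \<le> c" "c \<le> 1" using Msp_bounds[OF qM] q by auto
    have hb: "b > \<delta>" "e' \<le> \<delta>" using ph ql p q by auto
    have dpq: "dM p q = min (a + c) (2 - a - c) + (b - e')" unfolding dM_def p q using hb by auto
    have "dM p z0 = a + b - \<delta>" unfolding dM_def p z0_def using hb bp by auto
    then have l0: "\<bar>g p - g z0\<bar> \<le> a + b - \<delta>" using glip[OF pM z0M] by simp
    have "dM p z1 = 1 - a + b - \<delta>" unfolding dM_def p z1_def using hb bp by auto
    then have l1: "\<bar>g p - g z1\<bar> \<le> 1 - a + b - \<delta>" using glip[OF pM z1M] by simp
    have Fp: "F p = g p - g z0 - D * a" unfolding F_def p using hb by auto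
    have Fp': "F p = (g p - g z1) + D * (1 - a)" unfolding Fp D_def by (simp add: algebra_simps)
    have "\<bar>D * a\<bar> \<le> \<bar>D\<bar> * (a + b - \<delta>)"
      using bp hb by (simp add: abs_mult mult_left_mono)
    then have A1: "\<bar>F p\<bar> \<le> (1 + \<bar>D\<bar>) * (a + b - \<delta>)" using l0 unfolding Fp distrib_right
      by (smt (verit))
    have "\<bar>D * (1 - a)\<bar> \<le> \<bar>D\<bar> * (1 - a + b - \<delta>)"
      using bp hb by (simp add: abs_mult mult_left_mono)
    then have A2: "\<bar>F p\<bar> \<le> (1 + \<bar>D\<bar>) * (1 - a + b - \<delta>)" using l1 unfolding Fp' distrib_right
      by (smt (verit))
    have "\<bar>F p\<bar> \<le> (1 + \<bar>D\<bar>) * dM p q"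
    proof (cases "a + c \<le> 2 - a - c")
      case True
      then have "dM p q = a + c + (b - e')" using dpq by simp
      moreover have "(1 + \<bar>D\<bar>) * (a + b - \<delta>) \<le> (1 + \<bar>D\<bar>) * (a + c + (b - e'))"
        using bq hb by (intro mult_left_mono) auto
      ultimately show ?thesis using A1 by (metis order.trans)
    next
      case False
      then have "dM p q = 2 - a - c + (b - e')" using dpq by simp
      moreover have "(1 + \<bar>D\<bar>) * (1 - a + b - \<delta>) \<le> (1 + \<bar>D\<bar>) * (2 - a - c + (b - e'))"
        using bq hb by (intro mult_left_mono) auto
      ultimately show ?thesis using A2 by (metis order.trans)
    qed
    also have "\<dots> \<le> K * dM p q" using DK dM_nonneg[OF pM qM] by (intro mult_right_mono) auto
    finally show ?thesis .
  qed
  have HH: "\<bar>F p - F q\<bar> \<le> K * dM p q" if pM: "p \<in> Msp" and qM: "q \<in> Msp"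
    and ph: "snd p > \<delta>" and qh: "snd q > \<delta>" for p q
  proof -
    have "F p - F q = (g p - g q) - D * (fst p - fst q)" unfolding F_def using ph qh
      by (simp add: algebra_simps)
    moreover have "\<bar>D * (fst p - fst q)\<bar> \<le> \<bar>D\<bar> * dM p q"
      using fst_lip[OF pM qM] by (simp add: abs_mult mult_left_mono)
    ultimately have "\<bar>F p - F q\<bar> \<le> (1 + \<bar>D\<bar>) * dM p q" using glip[OF pM qM] unfolding distrib_right
      by (smt (verit))
    also have "\<dots> \<le> K * dM p q" using DK dM_nonneg[OF pM qM] by (intro mult_right_mono) auto
    finally show ?thesis .
  qed
  have FL: "\<bar>F p - F q\<bar> \<le> K * dM p q" if pM: "p \<in> Msp" and qM: "q \<in> Msp" for p q
  proof (cases "snd p \<le> \<delta>")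
    case True
    show ?thesis
    proof (cases "snd q \<le> \<delta>")
      case True
      then show ?thesis using \<open>snd p \<le> \<delta>\<close> Kpos dM_nonneg[OF pM qM] unfolding F_def by simp
    next
      case False
      have "dM q p = dM p q" unfolding dM_def by (auto simp: abs_minus_commute)
      then show ?thesis using HL[OF qM pM _ True] False unfolding F_def using True
        by (simp add: abs_minus_commute)
    qed
  next
    case False
    show ?thesis
    proof (cases "snd q \<le> \<delta>")
      case True
      then show ?thesis using HL[OF pM qM _ True] False unfolding F_def by simp
    next
      case False2: False
      then show ?thesis using HH[OF pM qM] False by simp
    qed
  qed
  have fB: "f \<in> Lip0Ball"
    unfolding Lip0Ball_def
  proof (intro CollectI conjI ballI)
    show "f (0,0) = 0" unfolding f_def F_def using assms(2) by simp
  next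
    fix p q assume pM: "p \<in> Msp" and qM: "q \<in> Msp"
    have "\<bar>f p - f q\<bar> = \<bar>F p - F q\<bar> / K" unfolding f_def using Kpos
      by (simp add: diff_divide_distrib[symmetric] abs_divide)
    also have "\<dots> \<le> dM p q" using FL[OF pM qM] Kpos by (simp add: divide_simps mult.commute)
    finally show "\<bar>f p - f q\<bar> \<le> dM p q" .
  qed
  have fz: "\<forall>p\<in>Msp. pi2 p \<le> \<delta> \<longrightarrow> f p = 0" unfolding f_def F_def pi2_def by simp
  have tm: "lam i * mol (u i) (v i) f \<ge> lam i * (mol (u i) (v i) g - \<bar>D\<bar>) / K" if i: "i < n" for i
  proof -
    have Hi: "lam i \<ge> 0" "u i \<in> Msp" "v i \<in> Msp" "u i \<noteq> v i" "snd (u i) > \<delta>" "snd (v i) > \<delta>"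
      using H[OF i] unfolding pi2_def by auto
    define r where "r = (fst (u i) - fst (v i)) / dM (u i) (v i)"
    have r1: "\<bar>r\<bar> \<le> 1" unfolding r_def using fst_ratio Hi by auto
    have mf: "mol (u i) (v i) f = (mol (u i) (v i) g - D * r) / K"
      unfolding mol_def f_def F_def r_def using Hi
      by (simp add: divide_simps algebra_simps)
    have "D * r \<le> \<bar>D\<bar>" using r1
      by (metis abs_ge_self abs_mult mult.commute mult_left_le order_trans abs_ge_zero)
    then have "(mol (u i) (v i) g - \<bar>D\<bar>) / K \<le> mol (u i) (v i) f"
      unfolding mf using Kpos by (simp add: divide_right_mono)
    then have "lam i * ((mol (u i) (v i) g - \<bar>D\<bar>) / K) \<le> lam i * mol (u i) (v i) f"
      using Hi(1) by (rule mult_left_mono)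
    then show ?thesis by simp
  qed
  have "\<nu> f \<ge> (\<Sum>i<n. lam i * (mol (u i) (v i) g - \<bar>D\<bar>) / K)"
    unfolding nu using tm by (intro sum_mono) auto
  also have "(\<Sum>i<n. lam i * (mol (u i) (v i) g - \<bar>D\<bar>) / K) = (\<nu> g - \<bar>D\<bar>) / K"
    unfolding nu using S
    by (simp add: sum_divide_distrib[symmetric] right_diff_distrib sum_subtractf
        sum_distrib_right[symmetric])
  finally have nf: "\<nu> f \<ge> (\<nu> g - \<bar>D\<bar>) / K" .
  have "(\<nu> g - (2 * \<delta> + e)) / K \<le> (\<nu> g - \<bar>D\<bar>) / K"
    using Dle Kpos by (simp add: divide_right_mono)
  with nf have nf2: "\<nu> f \<ge> (normF \<nu> - 2 * \<delta> - e) / (1 + 2 * \<delta> + e)"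
    unfolding K_def gN by (simp add: algebra_simps)
  have bdd: "bdd_above (\<nu> ` Lip0Ball)"
  proof (rule bdd_aboveI2)
    fix h assume h: "h \<in> Lip0Ball"
    have "\<nu> h \<le> (\<Sum>i<n. lam i * 1)" unfolding nu
    proof (intro sum_mono)
      fix i assume "i \<in> {..<n}"
      then have Hi: "lam i \<ge> 0" "u i \<in> Msp" "v i \<in> Msp" "u i \<noteq> v i" using H by auto
      have "mol (u i) (v i) h \<le> 1" using mol_le1[OF h Hi(2-4)] by simp
      then show "lam i * mol (u i) (v i) h \<le> lam i * 1" using Hi(1) by (rule mult_left_mono)
    qed
    then show "\<nu> h \<le> 1" using S by simp
  qed
  have zB: "(\<lambda>_. 0) \<in> Lip0Ball" unfolding Lip0Ball_def using dM_nonneg by auto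
  have "\<nu> (\<lambda>_. 0) = 0" unfolding nu mol_def by simp
  then have N0: "normF \<nu> \<ge> 0" unfolding normF_def using cSUP_upper[OF zB bdd] by simp
  have "(normF \<nu> - \<epsilon> - 2 * \<delta>) / (1 + \<epsilon> + 2 * \<delta>) < (normF \<nu> - 2 * \<delta> - e) / (1 + 2 * \<delta> + e)"
    using final_ineq[OF N0 e0 ee assms(2)] .
  then have "(normF \<nu> - \<epsilon> - 2 * \<delta>) / (1 + \<epsilon> + 2 * \<delta>) < \<nu> f"
    using nf2 by (rule less_le_trans)
  with fB fz show ?thesis by blast
qed

end
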